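(* Let $m\ge 1$ be an integer, $1<p<\infty$, $q=p/(p-1)$, $K\ge 0$, and $0\le x_1\le x_2\le\cdots\le x_K\le 1$, with $x_0:=0$, $x_{K+1}:=1$. Let $$V^{K,m}_{m,p}[x_1,\dots,x_K]=\{f\in W_{m,p}[0,1] : (-1)^{k-1}f^{(m)}(t)\ge 0 \text{ for a.e. } t\in[x_{k-1},x_k],\ k=1,\dots,K+1\}.$$ Identify the dual space $W_{m,p}^*$ with $W_{m,q}[0,1]$ via the pairing $$\langle\langle g,f\rangle\rangle=\sum_{j=0}^{m-1} g^{(j)}(0)f^{(j)}(0)+\int_0^1 f^{(m)}(t)g^{(m)}(t)\,dt .$$ Then the negative polar of $V^{K,m}_{m,p}[x_1,\dots,x_K]$ is $$V^{K,m}_{m,p}[x_1,\dots,x_K]^-=-V^{K,m}_{m,q}[x_1,\dots,x_K]\cap W^0_{m,q},$$ i.e. the set of $g\in W_{m,q}$ with $g^{(j)}(0)=0$ for $0\le j\le m-1$ and $(-1)^{k-1}g^{(m)}(t)\le 0$ for a.e. $t\in[x_{k-1},x_k]$, $k=1,\dots,K+1$.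
   Context: $W_{m,p}[0,1]$ is the Sobolev space of functions $f$ on $[0,1]$ with $f,f',\dots,f^{(m-1)}$ absolutely continuous and $f^{(m)}\in L_p[0,1]$, normed by $\sum_{j=0}^{m-1}|f^{(j)}(0)|^p+\int_0^1|f^{(m)}|^p$. $W^0_{m,q}$ denotes the subspace of $W_{m,q}$ of functions whose first $m-1$ derivatives (and the function itself) vanish at $t=0$, i.e. $g^{(j)}(0)=0$ for $j=0,\dots,m-1$. For a closed convex cone $C\subset W_{m,p}$, its negative polar is $C^-=\{g\in W_{m,p}^*: \langle\langle g,f\rangle\rangle\le 0 \text{ for all } f\in C\}$. *)

theory Defs
  imports "HOL-Analysis.Analysis"
begin

definition abs_cont_on :: "real set \<Rightarrow> (real \<Rightarrow> real) \<Rightarrow> bool" where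
  "abs_cont_on S f \<longleftrightarrow>
     (\<forall>\<epsilon>>0. \<exists>\<delta>>0. \<forall>(n::nat) (a::nat \<Rightarrow> real) (b::nat \<Rightarrow> real).
        (\<forall>i<n. a i \<le> b i \<and> {a i..b i} \<subseteq> S) \<and>
        (\<forall>i<n. \<forall>j<n. i \<noteq> j \<longrightarrow> b i \<le> a j \<or> b j \<le> a i) \<and>
        (\<Sum>i<n. b i - a i) < \<delta>
        \<longrightarrow> (\<Sum>i<n. \<bar>f (b i) - f (a i)\<bar>) < \<epsilon>)"

text \<open>A function f in W_{m,p}[0,1] is represented together with its derivatives:
  F j is the j-th derivative f^(j) (F 0 = f).\<close>
definition sobolev :: "nat \<Rightarrow> real \<Rightarrow> (nat \<Rightarrow> real \<Rightarrow> real) \<Rightarrow> bool" where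
  "sobolev m p F \<longleftrightarrow>
     (\<forall>j<m. abs_cont_on {0..1} (F j) \<and>
        (AE t in lebesgue_on {0..1}. (F j has_real_derivative F (Suc j) t) (at t within {0..1}))) \<and>
     F m \<in> borel_measurable (lebesgue_on {0..1}) \<and>
     integrable (lebesgue_on {0..1}) (\<lambda>t. \<bar>F m t\<bar> powr p)"

definition sob_pairing :: "nat \<Rightarrow> (nat \<Rightarrow> real \<Rightarrow> real) \<Rightarrow> (nat \<Rightarrow> real \<Rightarrow> real) \<Rightarrow> real" where
  "sob_pairing m G F =
     (\<Sum>j<m. G j 0 * F j 0) + integral\<^sup>L (lebesgue_on {0..1}) (\<lambda>t. F m t * G m t)"

definition V_cone :: "nat \<Rightarrow> real \<Rightarrow> nat \<Rightarrow> (nat \<Rightarrow> real) \<Rightarrow> (nat \<Rightarrow> real \<Rightarrow> real) \<Rightarrow> bool" where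
  "V_cone m p K x F \<longleftrightarrow> sobolev m p F \<and>
     (\<forall>k\<in>{1..K+1}. AE t in lebesgue_on {x (k-1)..x k}. (-1::real)^(k-1) * F m t \<ge> 0)"

end

theory Submission imports Defs begin

lemma lip_abs_cont:
  assumes L: "L \<ge> 0" and lip: "\<And>s t. s \<in> {0..1} \<Longrightarrow> t \<in> {0..1} \<Longrightarrow> \<bar>f s - f t\<bar> \<le> L * \<bar>s - t\<bar>"
  shows "abs_cont_on {0..1} f"
  unfolding abs_cont_on_def
proof (intro allI impI)
  fix \<epsilon> :: real assume e: "\<epsilon> > 0"
  show "\<exists>\<delta>>0. \<forall>(n::nat) (a::nat \<Rightarrow> real) (b::nat \<Rightarrow> real).
        (\<forall>i<n. a i \<le> b i \<and> {a i..b i} \<subseteq> {0..1}) \<and>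
        (\<forall>i<n. \<forall>j<n. i \<noteq> j \<longrightarrow> b i \<le> a j \<or> b j \<le> a i) \<and>
        (\<Sum>i<n. b i - a i) < \<delta>
        \<longrightarrow> (\<Sum>i<n. \<bar>f (b i) - f (a i)\<bar>) < \<epsilon>"
  proof (intro exI[of _ "\<epsilon>/(L+1)"] conjI allI impI)
    show "\<epsilon>/(L+1) > 0" using e L by simp
    fix n and a b :: "nat \<Rightarrow> real"
    assume H: "(\<forall>i<n. a i \<le> b i \<and> {a i..b i} \<subseteq> {0..1}) \<and>
        (\<forall>i<n. \<forall>j<n. i \<noteq> j \<longrightarrow> b i \<le> a j \<or> b j \<le> a i) \<and>
        (\<Sum>i<n. b i - a i) < \<epsilon>/(L+1)"
    have "(\<Sum>i<n. \<bar>f (b i) - f (a i)\<bar>) \<le> (\<Sum>i<n. L * (b i - a i))"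
    proof (rule sum_mono)
      fix i assume "i \<in> {..<n}"
      then have "a i \<le> b i" "a i \<in> {0..1}" "b i \<in> {0..1}" using H by auto
      then show "\<bar>f (b i) - f (a i)\<bar> \<le> L * (b i - a i)" using lip[of "b i" "a i"] by simp
    qed
    also have "\<dots> = L * (\<Sum>i<n. b i - a i)" by (simp add: sum_distrib_left)
    also have "\<dots> \<le> L * (\<epsilon>/(L+1))" using H L by (intro mult_left_mono) auto
    also have "\<dots> < (L+1) * (\<epsilon>/(L+1))" using e L by (intro mult_strict_right_mono) auto
    also have "\<dots> = \<epsilon>" using L by simp
    finally show "(\<Sum>i<n. \<bar>f (b i) - f (a i)\<bar>) < \<epsilon>" .
  qed
qed

lemma AE_on_negl:
  assumes "negligible N" "S \<in> sets lebesgue" "\<And>t. t \<in> S \<Longrightarrow> t \<notin> N \<Longrightarrow> P t"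
  shows "AE t in lebesgue_on S. P t"
proof -
  have "AE t in lebesgue. t \<notin> N"
    using assms(1) by (intro AE_not_in) (simp add: negligible_iff_null_sets)
  then have "AE t in lebesgue. t \<in> S \<longrightarrow> P t" by eventually_elim (use assms(3) in auto)
  then show ?thesis using assms(2) by (subst AE_restrict_space_iff) auto
qed

fun itI :: "(nat \<Rightarrow> real) \<Rightarrow> nat \<Rightarrow> (real \<Rightarrow> real) \<Rightarrow> real \<Rightarrow> real" where
  "itI c 0 g = g"
| "itI c (Suc n) g = (\<lambda>t. c n + integral {0..t} (itI c n g))"


lemma int_diff_bound:
  fixes f :: "real \<Rightarrow> real"
  assumes fi: "f integrable_on {0..1}" and B: "B \<ge> 0" and fb: "\<And>t. t \<in> {0..1} \<Longrightarrow> \<bar>f t\<bar> \<le> B"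
    and s: "s \<in> {0..1}" and t: "t \<in> {0..1}"
  shows "\<bar>integral {0..s} f - integral {0..t} f\<bar> \<le> B * \<bar>s - t\<bar>"
proof -
  have *: "\<bar>integral {0..s} f - integral {0..t} f\<bar> \<le> B * (s - t)" if "t \<le> s" "s \<in> {0..1}" "t \<in> {0..1}" for s t
  proof -
    have fs: "f integrable_on {0..s}" using fi that by (intro integrable_on_subinterval[OF fi]) auto
    have "integral {0..t} f + integral {t..s} f = integral {0..s} f"
      using that fs by (intro Henstock_Kurzweil_Integration.integral_combine[OF _ _ fs]) auto
    then have "integral {0..s} f - integral {0..t} f = integral {t..s} f" by simp
    moreover have "norm (integral {t..s} f) \<le> B * Henstock_Kurzweil_Integration.content (cbox t s)"
    proof (rule has_integral_bound[OF B])
      show "(f has_integral integral {t..s} f) (cbox t s)"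
        using fi that by (simp add: integrable_integral integrable_on_subinterval)
      show "\<And>x. x \<in> cbox t s \<Longrightarrow> norm (f x) \<le> B" using fb that by auto
    qed
    ultimately show ?thesis using that by simp
  qed
  show ?thesis
  proof (cases "t \<le> s")
    case True then show ?thesis using *[OF True s t] by simp
  next
    case False then show ?thesis using *[of s t] s t by (simp add: abs_minus_commute)
  qed
qed

locale goodg =
  fixes g :: "real \<Rightarrow> real" and S :: "real set"
  assumes gi: "g integrable_on {0..1}"
    and gb: "\<And>t. t \<in> {0..1} \<Longrightarrow> \<bar>g t\<bar> \<le> 1"
    and Sf: "finite S"
    and gc: "\<And>t. t \<in> {0..1} \<Longrightarrow> t \<notin> S \<Longrightarrow> continuous (at t within {0..1}) g"
begin

lemma itI_props:
  "itI c n g integrable_on {0..1} \<and> (\<exists>B\<ge>0. \<forall>t\<in>{0..1}. \<bar>itI c n g t\<bar> \<le> B)"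
proof (induction n)
  case 0 then show ?case using gi gb by (auto intro!: exI[of _ 1])
next
  case (Suc n)
  then obtain B where B: "B \<ge> 0" "\<forall>t\<in>{0..1}. \<bar>itI c n g t\<bar> \<le> B" and fi: "itI c n g integrable_on {0..1}" by auto
  have lip: "B-lipschitz_on {0..1} (itI c (Suc n) g)"
  proof (rule lipschitz_onI[OF _ B(1)])
    fix s t :: real assume "s \<in> {0..1}" "t \<in> {0..1}"
    then show "dist (itI c (Suc n) g s) (itI c (Suc n) g t) \<le> B * dist s t"
      using int_diff_bound[OF fi B(1), of s t] B(2) by (simp add: dist_real_def)
  qed
  have "itI c (Suc n) g integrable_on {0..1}"
    by (rule integrable_continuous_interval, rule lipschitz_on_continuous_on[OF lip])
  moreover have "\<bar>itI c (Suc n) g t\<bar> \<le> \<bar>c n\<bar> + B" if "t \<in> {0..1}" for t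
  proof -
    have "\<bar>integral {0..t} (itI c n g) - integral {0..0} (itI c n g)\<bar> \<le> B * \<bar>t - 0\<bar>"
      using int_diff_bound[OF fi B(1), of t 0] B(2) that by simp
    then have "\<bar>integral {0..t} (itI c n g)\<bar> \<le> B" using that B(1)
      by simp (smt (verit) mult_left_le)
    then show ?thesis by simp
  qed
  ultimately show ?case using B(1) by (intro conjI exI[of _ "\<bar>c n\<bar> + B"]) auto
qed

lemma itI_lip: "\<exists>L\<ge>0. L-lipschitz_on {0..1} (itI c (Suc n) g)"
proof -
  obtain B where B: "B \<ge> 0" "\<forall>t\<in>{0..1}. \<bar>itI c n g t\<bar> \<le> B" and fi: "itI c n g integrable_on {0..1}"
    using itI_props by blast
  have "B-lipschitz_on {0..1} (itI c (Suc n) g)"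
  proof (rule lipschitz_onI[OF _ B(1)])
    fix s t :: real assume "s \<in> {0..1}" "t \<in> {0..1}"
    then show "dist (itI c (Suc n) g s) (itI c (Suc n) g t) \<le> B * dist s t"
      using int_diff_bound[OF fi B(1), of s t] B(2) by (simp add: dist_real_def)
  qed
  then show ?thesis using B by blast
qed

lemma itI_abs_cont: "abs_cont_on {0..1} (itI c (Suc n) g)"
proof -
  obtain L where L: "L \<ge> 0" "L-lipschitz_on {0..1} (itI c (Suc n) g)" using itI_lip by blast
  show ?thesis
    by (rule lip_abs_cont[OF L(1)]) (use lipschitz_onD[OF L(2)] in \<open>auto simp: dist_real_def\<close>)
qed

lemma itI_deriv:
  assumes t: "t \<in> {0..1}" and n: "n \<ge> 1 \<or> t \<notin> S"
  shows "(itI c (Suc n) g has_real_derivative itI c n g t) (at t within {0..1})"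
proof -
  have "((\<lambda>u. integral {0..u} (itI c n g)) has_real_derivative itI c n g t) (at t within {0..1})"
  proof (cases "n \<ge> 1")
    case True
    then obtain k where k: "n = Suc k" by (cases n) auto
    obtain L where L: "L-lipschitz_on {0..1} (itI c (Suc k) g)" using itI_lip by blast
    show ?thesis using integral_has_real_derivative[OF lipschitz_on_continuous_on[OF L] t] k by simp
  next
    case False
    then have n0: "n = 0" and tS: "t \<notin> S" using n by auto
    have "((\<lambda>u. integral {0..u} g) has_vector_derivative g t) (at t within ({0..1} - {}))"
      by (rule integral_has_vector_derivative_continuous_at) (use gi t tS gc in auto)
    then show ?thesis using n0 by (simp add: has_real_derivative_iff_has_vector_derivative)
  qed
  then show ?thesis by (auto intro!: derivative_eq_intros)
qed

end


lemma (in goodg) itI_sobolev: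
  assumes gm: "g \<in> borel_measurable (lebesgue_on {0..1})" and p: "p \<ge> 0"
  shows "sobolev m p (\<lambda>j. itI c (m - j) g)"
  unfolding sobolev_def
proof (intro conjI allI impI)
  fix j assume j: "j < m"
  then have e: "m - j = Suc (m - Suc j)" by simp
  show "abs_cont_on {0..1} (itI c (m - j) g)" unfolding e by (rule itI_abs_cont)
  show "AE t in lebesgue_on {0..1}. (itI c (m - j) g has_real_derivative itI c (m - Suc j) g t) (at t within {0..1})"
  proof (rule AE_on_negl[of S])
    show "negligible S" using Sf by (simp add: negligible_finite)
    show "{0..1::real} \<in> sets lebesgue" by simp
    fix t :: real assume "t \<in> {0..1}" "t \<notin> S"
    then show "(itI c (m - j) g has_real_derivative itI c (m - Suc j) g t) (at t within {0..1})"
      unfolding e by (intro itI_deriv) auto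
  qed
next
  show "itI c (m - m) g \<in> borel_measurable (lebesgue_on {0..1})" using gm by simp
  show "integrable (lebesgue_on {0..1}) (\<lambda>t. \<bar>itI c (m - m) g t\<bar> powr p)"
  proof (rule Bochner_Integration.integrable_bound[OF Lebesgue_Measure.integrable_const_ivl[of 0 1 "1::real"]])
    show "(\<lambda>t. \<bar>itI c (m - m) g t\<bar> powr p) \<in> borel_measurable (lebesgue_on {0..1})"
      using gm by simp measurable
    show "AE t in lebesgue_on {0..1}. norm (\<bar>itI c (m - m) g t\<bar> powr p) \<le> norm (1::real)"
      by (rule AE_I2) (use gb p in \<open>auto intro!: powr_le1\<close>)
  qed
qed

lemma abs_cont_neg: "abs_cont_on S f \<Longrightarrow> abs_cont_on S (\<lambda>t. - f t)"
proof -
  have e: "\<And>a b. \<bar>- f b - - f a\<bar> = \<bar>f b - f a\<bar>" by linarith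
  show "abs_cont_on S f \<Longrightarrow> abs_cont_on S (\<lambda>t. - f t)" unfolding abs_cont_on_def e .
qed

lemma sobolev_neg: "sobolev m p G \<Longrightarrow> sobolev m p (\<lambda>j t. - G j t)"
  unfolding sobolev_def
proof (elim conjE, intro conjI allI impI)
  fix j assume H: "\<forall>j<m. abs_cont_on {0..1} (G j) \<and>
        (AE t in lebesgue_on {0..1}. (G j has_real_derivative G (Suc j) t) (at t within {0..1}))" and j: "j < m"
  show "abs_cont_on {0..1} (\<lambda>t. - G j t)" using H j abs_cont_neg by blast
  have "AE t in lebesgue_on {0..1}. (G j has_real_derivative G (Suc j) t) (at t within {0..1})" using H j by blast
  then show "AE t in lebesgue_on {0..1}. ((\<lambda>t. - G j t) has_real_derivative - G (Suc j) t) (at t within {0..1})"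
    by (rule AE_mp) (auto intro!: AE_I2 DERIV_minus)
next
  assume "G m \<in> borel_measurable (lebesgue_on {0..1})" "integrable (lebesgue_on {0..1}) (\<lambda>t. \<bar>G m t\<bar> powr p)"
  then show "(\<lambda>t. - G m t) \<in> borel_measurable (lebesgue_on {0..1})" "integrable (lebesgue_on {0..1}) (\<lambda>t. \<bar>- G m t\<bar> powr p)"
    by auto
qed

lemma sobolev_L1:
  assumes "sobolev m q G" "q \<ge> 1"
  shows "integrable (lebesgue_on {0..1}) (G m)"
proof -
  have gm: "G m \<in> borel_measurable (lebesgue_on {0..1})" and
    gi: "integrable (lebesgue_on {0..1}) (\<lambda>t. \<bar>G m t\<bar> powr q)" using assms unfolding sobolev_def by auto
  show ?thesis
  proof (rule Bochner_Integration.integrable_bound[OF Bochner_Integration.integrable_add[OF Lebesgue_Measure.integrable_const_ivl[of 0 1 "1::real"] gi] gm])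
    show "AE t in lebesgue_on {0..1}. norm (G m t) \<le> norm (1 + \<bar>G m t\<bar> powr q)"
    proof (rule AE_I2)
      fix t
      have "\<bar>G m t\<bar> \<le> 1 + \<bar>G m t\<bar> powr q"
      proof (cases "\<bar>G m t\<bar> \<le> 1")
        case True then show ?thesis by (smt (verit) powr_ge_zero)
      next
        case False
        then have "\<bar>G m t\<bar> powr 1 \<le> \<bar>G m t\<bar> powr q" using assms(2) by (intro powr_mono) auto
        then show ?thesis using False by simp
      qed
      then show "norm (G m t) \<le> norm (1 + \<bar>G m t\<bar> powr q)" by simp
    qed
  qed
qed


lemma xmono:
  assumes "\<forall>k\<le>K. x k \<le> x (Suc k)" "i \<le> j" "j \<le> Suc K"
  shows "x i \<le> (x j :: real)"
  using assms(2,3)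
proof (induction j)
  case 0 then show ?case by simp
next
  case (Suc j)
  show ?case
  proof (cases "i = Suc j")
    case False
    then have "x i \<le> x j" using Suc by auto
    also have "x j \<le> x (Suc j)" using assms(1) Suc by auto
    finally show ?thesis .
  qed simp
qed

lemma cover:
  assumes "\<forall>k\<le>K. x k \<le> x (Suc k)" "x 0 = 0" "x (Suc K) = 1" "t \<in> {0..1::real}"
  shows "\<exists>k\<in>{1..Suc K}. t \<in> {x (k-1)..x k}"
proof -
  have "t \<le> x n \<longrightarrow> n \<le> Suc K \<longrightarrow> (\<exists>k\<in>{1..Suc K}. t \<in> {x (k-1)..x k})" for n
  proof (induction n)
    case 0
    have "x 0 \<le> x 1" using xmono[OF assms(1), of 0 1] by simp
    then show ?case using assms(2,4) by (auto intro!: bexI[of _ 1])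
  next
    case (Suc n)
    show ?case
    proof (cases "t \<le> x n")
      case True then show ?thesis using Suc by auto
    next
      case False then show ?thesis by (auto intro!: bexI[of _ "Suc n"])
    qed
  qed
  from this[of "Suc K"] show ?thesis using assms by auto
qed

lemma frontier_Icc_real: "(c::real) < d \<Longrightarrow> frontier {c..d} = {c,d}"
  using frontier_cbox[of c d] by (auto simp: cbox_interval box_real)

lemma sgn_sq: "((-1::real)^n) * (-1)^n = 1"
  by (induction n) auto

lemma interval_test:
  assumes G: "sobolev m q G" "q \<ge> 1" and p: "p \<ge> 0"
    and H: "\<forall>F. V_cone m p K x F \<longrightarrow> sob_pairing m G F \<le> 0"
    and x: "x 0 = 0" "x (Suc K) = 1" "\<forall>k\<le>K. x k \<le> x (Suc k)"
    and k: "k \<in> {1..Suc K}" and cd: "x (k-1) < c" "c < d" "d < x k"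
  shows "integral {c..d} (\<lambda>t. (-1)^(k-1) * G m t) \<le> 0"
proof -
  define s :: real where "s = (-1)^(k-1)"
  have s1: "\<bar>s\<bar> = 1" unfolding s_def by (simp add: power_abs)
  have ss: "s * s = 1" unfolding s_def by (rule sgn_sq)
  define g where "g = (\<lambda>t. s * indicator {c..d} t :: real)"
  have "x 0 \<le> x (k-1)" by (rule xmono[OF x(3)]) (use k in auto)
  then have c0: "0 \<le> c" using x(1) cd by auto
  have "x k \<le> x (Suc K)" by (rule xmono[OF x(3)]) (use k in auto)
  then have d1: "d \<le> 1" using x(2) cd by auto
  interpret goodg g "{c,d}"
  proof
    show "g integrable_on {0..1}"
    proof -
      have "(\<lambda>t. if t \<in> {c..d} then s else 0) integrable_on {0..1}"
        unfolding integrable_restrict_Int by (rule integrable_on_const) auto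
      moreover have "(\<lambda>t. if t \<in> {c..d} then s else 0) = g" unfolding g_def by (auto simp: indicator_def)
      ultimately show ?thesis by simp
    qed
    show "\<bar>g t\<bar> \<le> 1" for t using s1 unfolding g_def by (auto simp: indicator_def)
    show "finite {c,d}" by simp
    fix t :: real assume "t \<in> {0..1}" "t \<notin> {c,d}"
    then have "t \<notin> frontier {c..d}" using frontier_Icc_real[OF cd(2)] by simp
    then have "isCont (indicator {c..d} :: real \<Rightarrow> real) t"
      by (subst isCont_indicator)
    then have "isCont g t" unfolding g_def by (rule continuous_mult[OF continuous_const])
    then show "continuous (at t within {0..1}) g" by (rule continuous_at_imp_continuous_within)
  qed
  define F where "F = (\<lambda>j. itI (\<lambda>_. 0) (m - j) g)"
  have "g \<in> borel_measurable lborel" unfolding g_def by simp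
  then have gm: "g \<in> borel_measurable (lebesgue_on {0..1})"
    by (intro measurable_restrict_space1 measurable_completion)
  have "V_cone m p K x F"
    unfolding V_cone_def
  proof (intro conjI ballI)
    show "sobolev m p F" unfolding F_def by (rule itI_sobolev[OF gm p])
    fix k' assume k': "k' \<in> {1..K+1}"
    show "AE t in lebesgue_on {x (k' - 1)..x k'}. 0 \<le> (-1) ^ (k' - 1) * F m t"
    proof (rule AE_I2)
      fix t assume t: "t \<in> space (lebesgue_on {x (k' - 1)..x k'})"
      show "0 \<le> (-1) ^ (k' - 1) * F m t"
      proof (cases "t \<in> {c..d}")
        case False then show ?thesis by (simp add: F_def g_def)
      next
        case True
        have "k' = k"
        proof (rule ccontr)
          assume "k' \<noteq> k"
          then consider "k' < k" | "k < k'" by linarith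
          then show False
          proof cases
            case 1
            then have "x k' \<le> x (k-1)" using k k' by (intro xmono[OF x(3)]) auto
            then show False using t True cd by auto
          next
            case 2
            then have "x k \<le> x (k'-1)" using k k' by (intro xmono[OF x(3)]) auto
            then show False using t True cd by auto
          qed
        qed
        then show ?thesis using True ss by (simp add: F_def g_def s_def)
      qed
    qed
  qed
  then have P: "sob_pairing m G F \<le> 0" using H by blast
  have F0: "F j 0 = 0" if "j < m" for j
  proof -
    have "m - j = Suc (m - Suc j)" using that by simp
    then show ?thesis by (simp add: F_def)
  qed
  have Gi: "integrable (lebesgue_on {0..1}) (G m)" by (rule sobolev_L1[OF G])
  have Gmeas: "G m \<in> borel_measurable (lebesgue_on {0..1})" using G unfolding sobolev_def by auto
  have int: "integrable (lebesgue_on {0..1}) (\<lambda>t. g t * G m t)"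
  proof (rule Bochner_Integration.integrable_bound[OF Gi])
    show "(\<lambda>t. g t * G m t) \<in> borel_measurable (lebesgue_on {0..1})" using gm Gmeas by measurable
    show "AE t in lebesgue_on {0..1}. norm (g t * G m t) \<le> norm (G m t)"
      by (rule AE_I2) (use s1 in \<open>auto simp: g_def indicator_def abs_mult\<close>)
  qed
  define P where "P = integral\<^sup>L (lebesgue_on {0..1}) (\<lambda>t. g t * G m t)"
  have "((\<lambda>t. g t * G m t) has_integral P) {0..1}"
    unfolding P_def by (rule has_integral_integral_lebesgue_on[OF int]) simp
  moreover have "(\<lambda>t. g t * G m t) = (\<lambda>t. if t \<in> {c..d} then s * G m t else 0)"
    by (auto simp: g_def indicator_def)
  ultimately have "((\<lambda>t. if t \<in> {c..d} then s * G m t else 0) has_integral P) {0..1}" by simp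
  then have "((\<lambda>t. s * G m t) has_integral P) ({c..d} \<inter> {0..1})"
    by (rule has_integral_restrict_Int[THEN iffD1])
  moreover have "{c..d} \<inter> {0..1} = {c..d}" using c0 d1 by auto
  ultimately have "integral {c..d} (\<lambda>t. s * G m t) = integral\<^sup>L (lebesgue_on {0..1}) (\<lambda>t. g t * G m t)"
    unfolding P_def by (metis integral_unique)
  also have "\<dots> = sob_pairing m G F"
    unfolding sob_pairing_def using F0 by (simp add: F_def mult.commute)
  finally show ?thesis using P s_def by simp
qed


lemma sign_from_intervals:
  fixes G :: "real \<Rightarrow> real"
  assumes Gi: "G integrable_on {0..1}" and ab: "0 \<le> a" "b \<le> 1"
    and I: "\<And>c d. a < c \<Longrightarrow> c < d \<Longrightarrow> d < b \<Longrightarrow> integral {c..d} (\<lambda>t. s * G t) \<le> 0"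
  shows "AE t in lebesgue_on {a..b}. 0 \<le> s * (- G t)"
proof -
  define h where "h = (\<lambda>t. if t \<in> {a..b} then s * G t else 0)"
  have sGi: "(\<lambda>t. s * G t) integrable_on {0..1}" by (rule integrable_on_mult_right[OF Gi])
  have hi: "h integrable_on cbox u v" for u v :: real
    unfolding h_def cbox_interval integrable_restrict_Int Int_atLeastAtMost
    by (rule integrable_on_subinterval[OF sGi]) (use ab in auto)
  obtain N where N: "negligible N"
    "\<And>x e. \<lbrakk>x \<notin> N; 0 < e\<rbrakk> \<Longrightarrow>
               \<exists>d>0. \<forall>hh. 0 < hh \<and> hh < d \<longrightarrow>
                         norm(integral (cbox x (x + hh *\<^sub>R One)) h /\<^sub>R hh ^ DIM(real) - h x) < e"
    using integrable_ccontinuous_explicit[of h] hi by blast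
  show ?thesis
  proof (rule AE_on_negl[of "N \<union> {a,b}"])
    show "negligible (N \<union> {a, b})" using N(1) by (simp add: negligible_insert)
    show "{a..b} \<in> sets lebesgue" by simp
    fix t assume t: "t \<in> {a..b}" "t \<notin> N \<union> {a, b}"
    show "0 \<le> s * - G t"
    proof (rule ccontr)
      assume "\<not> 0 \<le> s * - G t"
      then have pos: "h t > 0" using t by (simp add: h_def)
      obtain \<delta> where \<delta>: "\<delta> > 0" "\<forall>hh. 0 < hh \<and> hh < \<delta> \<longrightarrow>
                         norm(integral (cbox t (t + hh *\<^sub>R One)) h /\<^sub>R hh ^ DIM(real) - h t) < h t"
        using N(2)[OF _ pos] t by blast
      define hh where "hh = min (\<delta>/2) ((b - t)/2)"
      have tb: "t < b" using t by auto
      have "hh \<le> (b - t)/2" "hh \<le> \<delta>/2" unfolding hh_def by (rule min.cobounded2, rule min.cobounded1)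
      then have hh: "0 < hh" "hh < \<delta>" "t + hh < b" using \<delta> tb by (auto simp: hh_def)
      have "\<bar>integral {t..t+hh} h / hh - h t\<bar> < h t"
        using \<delta>(2)[rule_format, of hh] hh by (simp add: cbox_interval divide_inverse mult.commute)
      moreover have "integral {t..t+hh} h = integral {t..t+hh} (\<lambda>u. s * G u)"
      proof -
        have eq: "{a..b} \<inter> {t..t+hh} = {t..t+hh}" using t hh by auto
        show ?thesis unfolding h_def integral_restrict_Int eq ..
      qed
      moreover have "integral {t..t+hh} (\<lambda>u. s * G u) \<le> 0" using t hh by (intro I) auto
      ultimately have "\<bar>integral {t..t+hh} h / hh - h t\<bar> < h t" "integral {t..t+hh} h / hh \<le> 0"
        using hh by (auto simp: divide_nonpos_pos)
      then show False using pos by linarith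
    qed
  qed
qed


theorem corollary1:
  fixes m K :: nat and p q :: real and x :: "nat \<Rightarrow> real"
    and G :: "nat \<Rightarrow> real \<Rightarrow> real"
  assumes "m \<ge> 1" and "1 < p" and "q = p / (p - 1)"
    and "x 0 = 0" and "x (Suc K) = 1" and "\<forall>k\<le>K. x k \<le> x (Suc k)"
    and "sobolev m q G"
  shows "(\<forall>F. V_cone m p K x F \<longrightarrow> sob_pairing m G F \<le> 0) \<longleftrightarrow>
         ((\<forall>j<m. G j 0 = 0) \<and> V_cone m q K x (\<lambda>j t. - G j t))"
proof
  have q1: "q \<ge> 1" using assms(2) unfolding assms(3) by (simp add: le_divide_eq)
  have p0: "p \<ge> 0" using assms(2) by simp
  assume H: "\<forall>F. V_cone m p K x F \<longrightarrow> sob_pairing m G F \<le> 0"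
  show "(\<forall>j<m. G j 0 = 0) \<and> V_cone m q K x (\<lambda>j t. - G j t)"
  proof (intro conjI)
    define c where "c = (\<lambda>n. G (m - Suc n) 0)"
    define F where "F = (\<lambda>j. itI c (m - j) (\<lambda>_. 0))"
    interpret goodg "\<lambda>_. 0" "{}" by standard auto
    have "V_cone m p K x F" unfolding V_cone_def
      by (intro conjI ballI AE_I2) (auto simp: F_def intro: itI_sobolev[OF _ p0])
    then have P: "sob_pairing m G F \<le> 0" using H by blast
    have F0: "F j 0 = G j 0" if "j < m" for j
    proof -
      have e: "m - j = Suc (m - Suc j)" using that by simp
      have "m - Suc (m - Suc j) = j" using that by simp
      then show ?thesis unfolding F_def e by (simp add: c_def)
    qed
    have "sob_pairing m G F = (\<Sum>j<m. G j 0 * G j 0)"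
      unfolding sob_pairing_def using F0 by (simp add: F_def)
    then have "(\<Sum>j<m. G j 0 * G j 0) \<le> 0" using P by simp
    moreover have "\<forall>j\<in>{..<m}. 0 \<le> G j 0 * G j 0" by simp
    ultimately have "\<forall>j\<in>{..<m}. G j 0 * G j 0 = 0"
      using sum_nonneg_eq_0_iff[of "{..<m}" "\<lambda>j. G j 0 * G j 0"] by (simp add: order_antisym sum_nonneg)
    then show "\<forall>j<m. G j 0 = 0" by simp
  next
    show "V_cone m q K x (\<lambda>j t. - G j t)" unfolding V_cone_def
    proof (intro conjI ballI)
      show "sobolev m q (\<lambda>j t. - G j t)" by (rule sobolev_neg[OF assms(7)])
      fix k assume k: "k \<in> {1..K+1}"
      have Gi: "G m integrable_on {0..1}"
        by (rule integrable_on_lebesgue_on[OF sobolev_L1[OF assms(7) q1]]) simp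
      have "x 0 \<le> x (k-1)" by (rule xmono[OF assms(6)]) (use k in auto)
      moreover have "x k \<le> x (Suc K)" by (rule xmono[OF assms(6)]) (use k in auto)
      ultimately have ab: "0 \<le> x (k-1)" "x k \<le> 1" using assms(4,5) by auto
      show "AE t in lebesgue_on {x (k - 1)..x k}. 0 \<le> (-1) ^ (k - 1) * - G m t"
        by (rule sign_from_intervals[OF Gi ab])
          (rule interval_test[OF assms(7) q1 p0 H assms(4,5,6)], use k in auto)
    qed
  qed
next
  assume R: "(\<forall>j<m. G j 0 = 0) \<and> V_cone m q K x (\<lambda>j t. - G j t)"
  show "\<forall>F. V_cone m p K x F \<longrightarrow> sob_pairing m G F \<le> 0"
  proof (intro allI impI)
    fix F assume VF: "V_cone m p K x F"
    have AF: "\<forall>k\<in>{1..Suc K}. AE t in lebesgue. t \<in> {x (k-1)..x k} \<longrightarrow> 0 \<le> (-1)^(k-1) * F m t"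
      using VF unfolding V_cone_def by (subst (asm) AE_restrict_space_iff) auto
    have AG: "\<forall>k\<in>{1..Suc K}. AE t in lebesgue. t \<in> {x (k-1)..x k} \<longrightarrow> 0 \<le> (-1)^(k-1) * - G m t"
      using R unfolding V_cone_def by (subst (asm) AE_restrict_space_iff) auto
    have "AE t in lebesgue. \<forall>k\<in>{1..Suc K}. (t \<in> {x (k-1)..x k} \<longrightarrow> 0 \<le> (-1)^(k-1) * F m t) \<and>
          (t \<in> {x (k-1)..x k} \<longrightarrow> 0 \<le> (-1)^(k-1) * - G m t)"
      using AF AG by (intro eventually_ball_finite) (auto intro: eventually_conj)
    then have "AE t in lebesgue. t \<in> {0..1} \<longrightarrow> F m t * G m t \<le> 0"
    proof (rule AE_mp, intro AE_I2 impI)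
      fix t assume A: "\<forall>k\<in>{1..Suc K}. (t \<in> {x (k-1)..x k} \<longrightarrow> 0 \<le> (-1)^(k-1) * F m t) \<and>
          (t \<in> {x (k-1)..x k} \<longrightarrow> 0 \<le> (-1)^(k-1) * - G m t)" and t: "t \<in> {0..1}"
      obtain k where k: "k \<in> {1..Suc K}" "t \<in> {x (k-1)..x k}" using cover[OF assms(6,4,5) t] by blast
      define s :: real where "s = (-1)^(k-1)"
      have ss: "s * s = 1" unfolding s_def by (rule sgn_sq)
      have "0 \<le> s * F m t" "0 \<le> s * - G m t" using A k unfolding s_def by auto
      then have "0 \<le> (s * F m t) * (s * - G m t)" by (rule mult_nonneg_nonneg)
      also have "(s * F m t) * (s * - G m t) = - (F m t * G m t)"
        using ss by (simp add: algebra_simps)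
      finally show "F m t * G m t \<le> 0" by simp
    qed
    then have "AE t in lebesgue_on {0..1}. F m t * G m t \<le> 0"
      by (subst AE_restrict_space_iff) auto
    then have "AE t in lebesgue_on {0..1}. 0 \<le> - (F m t * G m t)" by (rule AE_mp) (auto intro!: AE_I2)
    then have "0 \<le> integral\<^sup>L (lebesgue_on {0..1}) (\<lambda>t. - (F m t * G m t))"
      by (rule integral_nonneg_AE)
    then have "integral\<^sup>L (lebesgue_on {0..1}) (\<lambda>t. F m t * G m t) \<le> 0" by simp
    then show "sob_pairing m G F \<le> 0" unfolding sob_pairing_def using R by simp
  qed
qed

end
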